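(* Let $\mathcal{A}=\mathcal{R}*_K\mathcal{S}*_L\mathcal{T}\in\mathbb{C}^{I_1\times\cdots\times I_N\times J_1\times\cdots\times J_M}$, where $\mathcal{R}\in\mathbb{C}^{I_1\times\cdots\times I_N\times H_1\times\cdots\times H_K}$, $\mathcal{S}\in\mathbb{C}^{H_1\times\cdots\times H_K\times G_1\times\cdots\times G_L}$ and $\mathcal{T}\in\mathbb{C}^{G_1\times\cdots\times G_L\times J_1\times\cdots\times J_M}$. Then $$(\mathcal{R}^{\dagger}*_N\mathcal{A}*_M\mathcal{T}^{\dagger})^{\dagger}=(\mathcal{A}*_M\mathcal{T}^{\dagger})^{\dagger}*_N\mathcal{A}*_M(\mathcal{R}^{\dagger}*_N\mathcal{A})^{\dagger}.$$
   Context: $\mathbb{C}^{I_1\times\cdots\times I_N}$ denotes the set of complex tensors of order $N$ and dimension $I_1\times\cdots\times I_N$. For $\mathcal{A}\in\mathbb{C}^{I_1\times\cdots\times I_N\times K_1\times\cdots\times K_N}$ and $\mathcal{B}\in\mathbb{C}^{K_1\times\cdots\times K_N\times J_1\times\cdots\times J_M}$, the Einstein product $\mathcal{A}*_N\mathcal{B}\in\mathbb{C}^{I_1\times\cdots\times I_N\times J_1\times\cdots\times J_M}$ is defined by $(\mathcal{A}*_N\mathcal{B})_{i_1\dots i_N j_1\dots j_M}=\sum_{k_1,\dots,k_N}a_{i_1\dots i_N k_1\dots k_N}b_{k_1\dots k_N j_1\dots j_M}$; it is associative. For $\mathcal{A}\in\mathbb{C}^{I_1\times\cdots\times I_N\times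 J_1\times\cdots\times J_M}$, $\mathcal{A}^H$ denotes the conjugate transpose, $(\mathcal{A}^H)_{j_1\dots j_M i_1\dots i_N}=\overline{a_{i_1\dots i_N j_1\dots j_M}}$, and the Moore–Penrose inverse $\mathcal{A}^{\dagger}$ is the unique tensor $\mathcal{X}\in\mathbb{C}^{J_1\times\cdots\times J_M\times I_1\times\cdots\times I_N}$ with $\mathcal{A}*_M\mathcal{X}*_N\mathcal{A}=\mathcal{A}$, $\mathcal{X}*_N\mathcal{A}*_M\mathcal{X}=\mathcal{X}$, $(\mathcal{A}*_M\mathcal{X})^H=\mathcal{A}*_M\mathcal{X}$, $(\mathcal{X}*_N\mathcal{A})^H=\mathcal{X}*_N\mathcal{A}$. *)

theory Defs
  imports Complex_Main
begin

text \<open>A tensor in C^(I_1 x ... x I_N x J_1 x ... x J_M) is modelled as a function of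
  two index blocks: the block (i_1,...,i_N) ranges over a finite type 'i (standing for
  the index set I_1 x ... x I_N), the block (j_1,...,j_M) over a finite type 'j.\<close>

type_synonym ('i, 'j) tensor = "'i \<Rightarrow> 'j \<Rightarrow> complex"

definition einstein :: "('i, 'k::finite) tensor \<Rightarrow> ('k, 'j) tensor \<Rightarrow> ('i, 'j) tensor"
  (infixl "\<star>" 70) where
  "A \<star> B = (\<lambda>i j. \<Sum>k\<in>UNIV. A i k * B k j)"

definition ctrans :: "('i, 'j) tensor \<Rightarrow> ('j, 'i) tensor" where
  "ctrans A = (\<lambda>j i. cnj (A i j))"

definition is_mp_inverse :: "('i::finite, 'j::finite) tensor \<Rightarrow> ('j, 'i) tensor \<Rightarrow> bool" where
  "is_mp_inverse A X \<longleftrightarrow>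
     A \<star> X \<star> A = A \<and> X \<star> A \<star> X = X \<and>
     ctrans (A \<star> X) = A \<star> X \<and> ctrans (X \<star> A) = X \<star> A"

definition mp_inv :: "('i::finite, 'j::finite) tensor \<Rightarrow> ('j, 'i) tensor" where
  "mp_inv A = (THE X. is_mp_inverse A X)"

end

theory Submission
  imports Defs "HOL-Analysis.Analysis"
begin


definition ct :: "complex^'n^'m \<Rightarrow> complex^'m^'n" where
  "ct A = (\<chi> i j. cnj (A$j$i))"

lemma ct_nth[simp]: "ct A $ i $ j = cnj (A$j$i)" by (simp add: ct_def)

lemma ct_ct[simp]: "ct (ct A) = A" by (simp add: vec_eq_iff)

lemma ct_mult: "ct (A ** B) = ct B ** ct A"
  by (simp add: vec_eq_iff matrix_matrix_mult_def mult.commute)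

lemma ct_mat1[simp]: "ct (mat 1 :: complex^'n^'n) = mat 1"
  by (simp add: vec_eq_iff mat_def)

lemma matrix_sub_ldistrib: "(A::complex^'n^'m) ** (B - C) = A ** B - A ** C"
  by (simp add: vec_eq_iff matrix_matrix_mult_def algebra_simps sum_subtractf)

lemma matrix_scaleR_right: "(A::complex^'n^'m) ** (c *\<^sub>R B) = c *\<^sub>R (A ** B)"
  by (simp add: vec_eq_iff matrix_matrix_mult_def scaleR_sum_right mult_scaleR_right)

lemma matrix_scaleR_left: "(c *\<^sub>R (A::complex^'n^'m)) ** B = c *\<^sub>R (A ** B)"
  by (simp add: scalar_matrix_assoc)

lemma matrix_sum_ldistrib: "(A::complex^'n^'m) ** (\<Sum>i\<in>S. f i) = (\<Sum>i\<in>S. A ** f i)"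
proof (cases "finite S")
  case True then show ?thesis
    by (induction S rule: finite_induct) (simp_all add: matrix_add_ldistrib)
qed simp

lemma matrix_add_rdistrib: "((B::complex^'n^'m) + C) ** A = B ** A + C ** A"
  by (simp add: vec_eq_iff matrix_matrix_mult_def algebra_simps sum.distrib)

lemma matrix_sum_rdistrib: "(\<Sum>i\<in>S. f i) ** (A::complex^'n^'m) = (\<Sum>i\<in>S. f i ** A)"
proof (cases "finite S")
  case True then show ?thesis
    by (induction S rule: finite_induct) (simp_all add: matrix_add_rdistrib)
qed simp

lemma cnj_mult_self: "cnj z * z = complex_of_real ((cmod z)^2)"
  by (metis complex_norm_square mult.commute of_real_power)

lemma gram_zero:
  fixes X :: "complex^'n^'m"
  assumes "ct X ** X = 0" shows "X = 0"
proof -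
  have "X $ k $ j = 0" for k j
  proof -
    have "(ct X ** X) $ j $ j = 0" using assms by simp
    then have "(\<Sum>l\<in>UNIV. cnj (X$l$j) * X$l$j) = 0" by (simp add: matrix_matrix_mult_def)
    then have "(\<Sum>l\<in>UNIV. complex_of_real ((cmod (X$l$j))\<^sup>2)) = 0"
      by (simp only: cnj_mult_self)
    then have "(\<Sum>l\<in>UNIV. (cmod (X$l$j))\<^sup>2) = 0"
      by (metis of_real_eq_0_iff of_real_sum)
    then have "(cmod (X$k$j))\<^sup>2 = 0"
      using sum_nonneg_eq_0_iff[of UNIV "\<lambda>l. (cmod (X$l$j))\<^sup>2"] by simp
    then show ?thesis by simp
  qed
  then show ?thesis by (simp add: vec_eq_iff)
qed

lemma gram_cancel:
  fixes X :: "complex^'n^'m" and Y :: "complex^'p^'n"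
  assumes "ct X ** X ** Y = 0" shows "X ** Y = 0"
proof -
  have "ct (X ** Y) ** (X ** Y) = ct Y ** (ct X ** X ** Y)"
    by (simp add: ct_mult matrix_mul_assoc)
  also have "\<dots> = 0" using assms by simp
  finally show ?thesis by (rule gram_zero)
qed

fun mpow :: "complex^'n^'n \<Rightarrow> nat \<Rightarrow> complex^'n^'n" where
  "mpow M 0 = mat 1"
| "mpow M (Suc k) = M ** mpow M k"

lemma mpow_comm: "M ** mpow M k = mpow M k ** M"
  by (induction k) (simp_all add: matrix_mul_assoc)

lemma mpow_add: "mpow M (a + b) = mpow M a ** mpow M b"
  by (induction a) (simp_all add: matrix_mul_assoc)


lemma annihilating:
  fixes M :: "complex^'n^'n"
  shows "\<exists>a N. (\<exists>i\<le>N. a i \<noteq> (0::real)) \<and> (\<Sum>i\<le>N. a i *\<^sub>R mpow M i) = 0"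
proof (cases "inj_on (mpow M) {..DIM(complex^'n^'n)}")
  case True
  define S where "S = mpow M ` {..DIM(complex^'n^'n)}"
  have fin: "finite S" by (simp add: S_def)
  have "card S = Suc DIM(complex^'n^'n)" using True by (simp add: S_def card_image)
  then have "dependent S" using dependent_biggerset[of S] by simp
  then obtain u where u: "\<exists>v\<in>S. u v \<noteq> 0" "(\<Sum>v\<in>S. u v *\<^sub>R v) = 0"
    using dependent_finite[OF fin] by blast
  have "(\<Sum>i\<le>DIM(complex^'n^'n). (u \<circ> mpow M) i *\<^sub>R mpow M i) = 0"
    using u(2) True by (simp add: S_def sum.reindex)
  moreover have "\<exists>i\<le>DIM(complex^'n^'n). (u \<circ> mpow M) i \<noteq> 0"
    using u(1) by (auto simp: S_def)
  ultimately show ?thesis by blast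
next
  case False
  then obtain i j where ij: "i \<le> DIM(complex^'n^'n)" "j \<le> DIM(complex^'n^'n)" "i \<noteq> j" "mpow M i = mpow M j"
    by (auto simp: inj_on_def)
  define a where "a = (\<lambda>l. if l = i then 1 else if l = j then -1 else (0::real))"
  have "a l *\<^sub>R mpow M l = (if l = i then mpow M i else 0) + (if l = j then - mpow M j else 0)" for l
    using ij by (auto simp: a_def)
  then have "(\<Sum>l\<le>DIM(complex^'n^'n). a l *\<^sub>R mpow M l) = mpow M i - mpow M j"
    using ij by (simp add: sum.distrib)
  then have "(\<Sum>l\<le>DIM(complex^'n^'n). a l *\<^sub>R mpow M l) = 0" using ij by simp
  moreover have "a i \<noteq> 0" by (simp add: a_def)
  ultimately show ?thesis using ij by blast
qed

lemma herm_reduce: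
  fixes M B :: "complex^'n^'n"
  assumes "ct M = M" "mpow M k ** B = 0"
  shows "M ** B = 0"
proof (cases k)
  case 0 then show ?thesis using assms by simp
next
  case (Suc k')
  have "mpow M (Suc k') ** B = 0 \<Longrightarrow> M ** B = 0" for k'
  proof (induction k')
    case 0 then show ?case by simp
  next
    case (Suc j)
    have "ct M ** M ** (mpow M j ** B) = 0"
      using Suc.prems assms(1) by (simp add: matrix_mul_assoc)
    then have "M ** (mpow M j ** B) = 0" by (rule gram_cancel)
    then show ?case using Suc.IH by (simp add: matrix_mul_assoc)
  qed
  then show ?thesis using assms Suc by blast
qed

lemma herm_one_inverse:
  fixes M :: "complex^'n^'n"
  assumes herm: "ct M = M"
  shows "\<exists>G. M ** G ** M = M"
proof -
  obtain a N where aN: "\<exists>i\<le>N. a i \<noteq> 0" "(\<Sum>i\<le>N. a i *\<^sub>R mpow M i) = 0"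
    using annihilating[of M] by blast
  define k where "k = (LEAST i. a i \<noteq> 0)"
  obtain i0 where i0: "i0 \<le> N" "a i0 \<noteq> 0" using aN(1) by blast
  have ak: "a k \<noteq> 0" unfolding k_def using LeastI[of "\<lambda>i. a i \<noteq> 0" i0] i0(2) by simp
  have "k \<le> i0" unfolding k_def using Least_le[of "\<lambda>i. a i \<noteq> 0" i0] i0(2) by simp
  then have kN: "k \<le> N" using i0(1) by simp
  have below: "a i = 0" if "i < k" for i using that not_less_Least unfolding k_def by blast
  define Rm where "Rm = (\<Sum>i\<in>{Suc k..N}. a i *\<^sub>R mpow M (i - Suc k))"
  define Bm where "Bm = (\<Sum>i\<in>{k..N}. a i *\<^sub>R mpow M (i - k))"
  have "mpow M k ** Bm = (\<Sum>i\<in>{k..N}. a i *\<^sub>R mpow M i)"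
  proof -
    have "mpow M k ** Bm = (\<Sum>i\<in>{k..N}. a i *\<^sub>R (mpow M k ** mpow M (i - k)))"
      by (simp add: Bm_def matrix_sum_ldistrib matrix_scaleR_right)
    also have "\<dots> = (\<Sum>i\<in>{k..N}. a i *\<^sub>R mpow M i)"
      by (rule sum.cong) (auto simp flip: mpow_add)
    finally show ?thesis .
  qed
  also have "\<dots> = (\<Sum>i\<le>N. a i *\<^sub>R mpow M i)"
  proof -
    have "{..N} = {..<k} \<union> {k..N}" using kN by auto
    then have "(\<Sum>i\<le>N. a i *\<^sub>R mpow M i) = (\<Sum>i\<in>{..<k}. a i *\<^sub>R mpow M i) + (\<Sum>i\<in>{k..N}. a i *\<^sub>R mpow M i)"
      by (simp add: sum.union_disjoint ivl_disj_int)
    also have "(\<Sum>i\<in>{..<k}. a i *\<^sub>R mpow M i) = 0" using below by simp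
    finally show ?thesis by simp
  qed
  finally have "mpow M k ** Bm = 0" using aN(2) by simp
  then have MB: "M ** Bm = 0" using herm_reduce[OF herm] by blast
  have BmR: "Bm = a k *\<^sub>R mat 1 + M ** Rm"
  proof -
    have "{k..N} = insert k {Suc k..N}" using kN by auto
    then have "Bm = a k *\<^sub>R mat 1 + (\<Sum>i\<in>{Suc k..N}. a i *\<^sub>R mpow M (i - k))"
      by (simp add: Bm_def)
    also have "(\<Sum>i\<in>{Suc k..N}. a i *\<^sub>R mpow M (i - k)) = M ** Rm"
      unfolding Rm_def matrix_sum_ldistrib matrix_scaleR_right
    proof (rule sum.cong)
      fix x assume "x \<in> {Suc k..N}"
      then have "x - k = Suc (x - Suc k)" by auto
      then show "a x *\<^sub>R mpow M (x - k) = a x *\<^sub>R (M ** mpow M (x - Suc k))" by simp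
    qed simp
    finally show ?thesis .
  qed
  have comm: "Rm ** M = M ** Rm"
    unfolding Rm_def matrix_sum_ldistrib matrix_sum_rdistrib matrix_scaleR_right matrix_scaleR_left
    by (simp add: mpow_comm)
  have "a k *\<^sub>R M + M ** M ** Rm = 0"
    using MB unfolding BmR by (simp add: matrix_add_ldistrib matrix_scaleR_right matrix_mul_assoc)
  then have MMR: "M ** M ** Rm = - (a k *\<^sub>R M)" by (simp add: add_eq_0_iff2)
  define c where "c = - 1 / a k"
  define G where "G = c *\<^sub>R Rm"
  have "M ** G ** M = c *\<^sub>R (M ** Rm ** M)"
    by (simp add: G_def matrix_scaleR_right matrix_scaleR_left)
  also have "M ** Rm ** M = M ** M ** Rm"
    by (simp add: comm flip: matrix_mul_assoc)
  also have "c *\<^sub>R (M ** M ** Rm) = M" using ak by (simp add: MMR c_def)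
  finally show ?thesis by blast
qed


lemma ct_gram: "ct (ct A ** A) = ct A ** (A::complex^'n^'m)"
  by (simp add: ct_mult)

lemma gram_key:
  fixes A :: "complex^'n^'m"
  assumes "ct A ** A ** G ** (ct A ** A) = ct A ** A"
  shows "A ** G ** (ct A ** A) = A"
proof -
  have "ct A ** A ** (mat 1 - G ** (ct A ** A)) = 0"
    using assms by (simp add: matrix_sub_ldistrib matrix_mul_assoc)
  then have "A ** (mat 1 - G ** (ct A ** A)) = 0" by (rule gram_cancel)
  then show ?thesis by (simp add: matrix_sub_ldistrib matrix_mul_assoc)
qed

lemma inv13:
  fixes A :: "complex^'n^'m"
  shows "\<exists>X. A ** X ** A = A \<and> ct (A ** X) = A ** X"
proof -
  define M where "M = ct A ** A"
  have herm: "ct M = M" by (simp add: M_def ct_gram)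
  obtain G where G: "M ** G ** M = M" using herm_one_inverse[OF herm] by blast
  have G': "M ** ct G ** M = M"
  proof -
    have "ct (M ** G ** M) = M ** ct G ** M" by (simp add: ct_mult herm matrix_mul_assoc)
    then show ?thesis using G herm by metis
  qed
  have k1: "A ** G ** M = A" using gram_key[of A G] G by (simp add: M_def)
  have k2: "A ** ct G ** M = A" using gram_key[of A "ct G"] G' by (simp add: M_def)
  have k2': "ct A = M ** G ** ct A"
  proof -
    have "ct A = ct (A ** ct G ** M)" using k2 by simp
    also have "\<dots> = M ** G ** ct A" by (simp add: ct_mult herm matrix_mul_assoc)
    finally show ?thesis .
  qed
  define X where "X = G ** ct A"
  have "A ** X ** A = A" using k1 by (simp add: X_def M_def matrix_mul_assoc)
  moreover have "ct (A ** X) = A ** X"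
  proof -
    have "A ** X = A ** G ** ct A" by (simp add: X_def matrix_mul_assoc)
    also have "\<dots> = (A ** ct G ** M) ** G ** ct A" using k2 by simp
    also have "\<dots> = A ** ct G ** (M ** G ** ct A)" by (simp add: matrix_mul_assoc)
    also have "\<dots> = A ** ct G ** ct A" using k2' by simp
    finally have e: "A ** X = A ** ct G ** ct A" .
    have "ct (A ** X) = A ** ct G ** ct A" by (simp add: X_def ct_mult matrix_mul_assoc)
    then show ?thesis using e by simp
  qed
  ultimately show ?thesis by blast
qed


lemma inv14:
  fixes A :: "complex^'n^'m"
  shows "\<exists>Y. A ** Y ** A = A \<and> ct (Y ** A) = Y ** A"
proof -
  obtain X where X: "ct A ** X ** ct A = ct A" "ct (ct A ** X) = ct A ** X"
    using inv13[of "ct A"] by blast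
  have "A ** ct X ** A = A"
  proof -
    have "ct (ct A ** X ** ct A) = A ** ct X ** A" by (simp add: ct_mult matrix_mul_assoc)
    then show ?thesis using X(1) by simp
  qed
  moreover have "ct (ct X ** A) = ct X ** A"
  proof -
    have "ct X ** A = ct (ct A ** X)" by (simp add: ct_mult)
    then show ?thesis using X(2) by simp
  qed
  ultimately show ?thesis by blast
qed

lemma mp_exists_vec:
  fixes A :: "complex^'n^'m"
  shows "\<exists>Z. A ** Z ** A = A \<and> Z ** A ** Z = Z \<and> ct (A ** Z) = A ** Z \<and> ct (Z ** A) = Z ** A"
proof -
  obtain X where X: "A ** X ** A = A" "ct (A ** X) = A ** X" using inv13 by blast
  obtain Y where Y: "A ** Y ** A = A" "ct (Y ** A) = Y ** A" using inv14 by blast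
  define Z where "Z = Y ** A ** X"
  have AZ: "A ** Z = A ** X" using Y(1) by (simp add: Z_def matrix_mul_assoc)
  have ZA: "Z ** A = Y ** A"
  proof -
    have "Z ** A = Y ** (A ** X ** A)" by (simp add: Z_def matrix_mul_assoc)
    then show ?thesis using X(1) by simp
  qed
  have "A ** Z ** A = A" using AZ X(1) by simp
  moreover have "Z ** A ** Z = Z"
  proof -
    have "Z ** A ** Z = Y ** (A ** Y ** A) ** X" using ZA by (simp add: Z_def matrix_mul_assoc)
    then show ?thesis using Y(1) by (simp add: Z_def)
  qed
  moreover have "ct (A ** Z) = A ** Z" using AZ X(2) by simp
  moreover have "ct (Z ** A) = Z ** A" using ZA Y(2) by simp
  ultimately show ?thesis by blast
qed



lemma einstein_assoc: "A \<star> (B \<star> C) = A \<star> B \<star> C"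
proof -
  have "(\<Sum>k\<in>UNIV. A i k * (\<Sum>l\<in>UNIV. B k l * C l j)) = (\<Sum>l\<in>UNIV. (\<Sum>k\<in>UNIV. A i k * B k l) * C l j)" for i j
  proof -
    have "(\<Sum>k\<in>UNIV. A i k * (\<Sum>l\<in>UNIV. B k l * C l j)) = (\<Sum>k\<in>UNIV. \<Sum>l\<in>UNIV. A i k * B k l * C l j)"
      by (simp add: sum_distrib_left mult.assoc)
    also have "\<dots> = (\<Sum>l\<in>UNIV. \<Sum>k\<in>UNIV. A i k * B k l * C l j)"
      by (rule sum.swap)
    also have "\<dots> = (\<Sum>l\<in>UNIV. (\<Sum>k\<in>UNIV. A i k * B k l) * C l j)"
      by (simp add: sum_distrib_right)
    finally show ?thesis .
  qed
  then show ?thesis by (simp add: einstein_def fun_eq_iff)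
qed

lemma ctrans_einstein: "ctrans (A \<star> B) = ctrans B \<star> ctrans A"
  by (simp add: ctrans_def einstein_def fun_eq_iff mult.commute)

lemma ctrans_ctrans[simp]: "ctrans (ctrans A) = A"
  by (simp add: ctrans_def)


definition toM :: "('i::finite, 'j::finite) tensor \<Rightarrow> complex^'j^'i" where
  "toM A = (\<chi> i j. A i j)"

definition fromM :: "complex^'j^'i \<Rightarrow> ('i::finite, 'j::finite) tensor" where
  "fromM Z = (\<lambda>i j. Z $ i $ j)"

lemma toM_nth[simp]: "toM A $ i $ j = A i j" by (simp add: toM_def)

lemma toM_inj: "toM A = toM B \<Longrightarrow> A = B"
  by (simp add: vec_eq_iff fun_eq_iff)

lemma toM_fromM[simp]: "toM (fromM Z) = Z"
  by (simp add: vec_eq_iff fromM_def)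

lemma toM_einstein: "toM (A \<star> B) = toM A ** toM B"
  by (simp add: vec_eq_iff matrix_matrix_mult_def einstein_def)

lemma toM_ctrans: "toM (ctrans A) = ct (toM A)"
  by (simp add: vec_eq_iff ctrans_def)

lemma mp_exists_some: "\<exists>X. is_mp_inverse (A::('i::finite,'j::finite) tensor) X"
proof -
  obtain Z where Z: "toM A ** Z ** toM A = toM A" "Z ** toM A ** Z = Z"
     "ct (toM A ** Z) = toM A ** Z" "ct (Z ** toM A) = Z ** toM A"
    using mp_exists_vec[of "toM A"] by blast
  define X where "X = (fromM Z :: ('j,'i) tensor)"
  have tX: "toM X = Z" by (simp add: X_def)
  have "A \<star> X \<star> A = A" by (rule toM_inj) (simp add: toM_einstein tX Z)
  moreover have "X \<star> A \<star> X = X" by (rule toM_inj) (simp add: toM_einstein tX Z)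
  moreover have "ctrans (A \<star> X) = A \<star> X" by (rule toM_inj) (simp add: toM_einstein toM_ctrans tX Z)
  moreover have "ctrans (X \<star> A) = X \<star> A" by (rule toM_inj) (simp add: toM_einstein toM_ctrans tX Z)
  ultimately show ?thesis unfolding is_mp_inverse_def by blast
qed

lemma mp_unique:
  fixes A :: "('i::finite,'j::finite) tensor"
  assumes X: "is_mp_inverse A X" and Y: "is_mp_inverse A Y"
  shows "X = Y"
proof -
  from X have X1: "A \<star> X \<star> A = A" and X2: "X \<star> A \<star> X = X"
    and X3: "ctrans (A \<star> X) = A \<star> X" and X4: "ctrans (X \<star> A) = X \<star> A"
    by (simp_all add: is_mp_inverse_def)
  from Y have Y1: "A \<star> Y \<star> A = A" and Y2: "Y \<star> A \<star> Y = Y"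
    and Y3: "ctrans (A \<star> Y) = A \<star> Y" and Y4: "ctrans (Y \<star> A) = Y \<star> A"
    by (simp_all add: is_mp_inverse_def)
  have "X = X \<star> (A \<star> X)" using X2 by (simp add: einstein_assoc)
  also have "\<dots> = X \<star> ctrans (A \<star> X)" using X3 by simp
  also have "\<dots> = X \<star> ctrans X \<star> ctrans A" by (simp add: ctrans_einstein einstein_assoc)
  also have "\<dots> = X \<star> ctrans X \<star> ctrans (A \<star> Y \<star> A)" using Y1 by simp
  also have "\<dots> = X \<star> ctrans X \<star> ctrans A \<star> ctrans (A \<star> Y)" by (simp add: ctrans_einstein einstein_assoc)
  also have "\<dots> = X \<star> ctrans (A \<star> X) \<star> (A \<star> Y)" using Y3 by (simp add: ctrans_einstein einstein_assoc)
  also have "\<dots> = (X \<star> A \<star> X) \<star> A \<star> Y" using X3 by (simp add: einstein_assoc)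
  also have "\<dots> = X \<star> A \<star> Y" using X2 by simp
  finally have eX: "X = X \<star> A \<star> Y" .
  have "Y = (Y \<star> A) \<star> Y" using Y2 by simp
  also have "\<dots> = ctrans (Y \<star> A) \<star> Y" using Y4 by simp
  also have "\<dots> = ctrans A \<star> ctrans Y \<star> Y" by (simp add: ctrans_einstein)
  also have "\<dots> = ctrans (A \<star> X \<star> A) \<star> ctrans Y \<star> Y" using X1 by simp
  also have "\<dots> = ctrans (X \<star> A) \<star> ctrans A \<star> ctrans Y \<star> Y" by (simp add: ctrans_einstein einstein_assoc)
  also have "\<dots> = (X \<star> A) \<star> ctrans (Y \<star> A) \<star> Y" using X4 by (simp add: ctrans_einstein einstein_assoc)
  also have "\<dots> = X \<star> A \<star> (Y \<star> A \<star> Y)" using Y4 by (simp add: einstein_assoc)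
  also have "\<dots> = X \<star> A \<star> Y" using Y2 by simp
  finally have eY: "Y = X \<star> A \<star> Y" .
  show ?thesis using eX eY by simp
qed

lemma mp_exists: "is_mp_inverse (A::('i::finite,'j::finite) tensor) (mp_inv A)"
proof -
  have "\<exists>!X. is_mp_inverse A X" using mp_exists_some mp_unique by blast
  then show ?thesis unfolding mp_inv_def by (rule theI')
qed


lemma mp1: "A \<star> mp_inv A \<star> A = A" using mp_exists[of A] by (simp add: is_mp_inverse_def)
lemma mp2: "mp_inv A \<star> A \<star> mp_inv A = mp_inv A" using mp_exists[of A] by (simp add: is_mp_inverse_def)
lemma mp3: "ctrans (A \<star> mp_inv A) = A \<star> mp_inv A" using mp_exists[of A] by (simp add: is_mp_inverse_def)
lemma mp4: "ctrans (mp_inv A \<star> A) = mp_inv A \<star> A" using mp_exists[of A] by (simp add: is_mp_inverse_def)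

lemma L1:
  fixes R :: "('i::finite, 'h::finite) tensor" and P :: "('h, 'g::finite) tensor"
  assumes "mp_inv R \<star> R \<star> P = P"
  shows "mp_inv (R \<star> P) \<star> (R \<star> P) = mp_inv P \<star> P"
proof -
  define B where "B = R \<star> P"
  define Q where "Q = mp_inv B \<star> B"
  define E where "E = mp_inv P \<star> P"
  have "B \<star> Q = B" unfolding Q_def using mp1[of B] by (simp add: einstein_assoc)
  then have "mp_inv R \<star> (R \<star> P \<star> Q) = mp_inv R \<star> (R \<star> P)" by (simp add: B_def)
  then have PQ: "P \<star> Q = P" using assms by (simp add: einstein_assoc)
  have EQ: "E \<star> Q = E" unfolding E_def using PQ by (simp flip: einstein_assoc)
  have QE: "Q \<star> E = Q"
  proof -
    have "Q \<star> E = mp_inv B \<star> R \<star> (P \<star> mp_inv P \<star> P)"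
      by (simp add: Q_def E_def B_def einstein_assoc)
    then show ?thesis by (simp add: mp1 Q_def B_def einstein_assoc)
  qed
  have "Q = ctrans Q" unfolding Q_def by (simp add: mp4)
  also have "\<dots> = ctrans (Q \<star> E)" using QE by simp
  also have "\<dots> = ctrans E \<star> ctrans Q" by (simp add: ctrans_einstein)
  also have "\<dots> = E \<star> Q" by (simp add: Q_def E_def mp4)
  also have "\<dots> = E" by (rule EQ)
  finally show ?thesis by (simp add: Q_def E_def B_def)
qed

lemma L2:
  fixes P :: "('i::finite, 'g::finite) tensor" and T :: "('g, 'j::finite) tensor"
  assumes "P \<star> T \<star> mp_inv T = P"
  shows "(P \<star> T) \<star> mp_inv (P \<star> T) = P \<star> mp_inv P"
proof -
  define C where "C = P \<star> T"
  define Q where "Q = C \<star> mp_inv C"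
  define E where "E = P \<star> mp_inv P"
  have QC: "Q \<star> C = C" unfolding Q_def using mp1[of C] by (simp add: einstein_assoc)
  have QP: "Q \<star> P = P"
  proof -
    have "Q \<star> P = Q \<star> (P \<star> T \<star> mp_inv T)" using assms by simp
    also have "\<dots> = (Q \<star> C) \<star> mp_inv T" by (simp add: C_def einstein_assoc)
    finally show ?thesis using QC assms by (simp add: C_def)
  qed
  have QE: "Q \<star> E = E" unfolding E_def using QP by (simp add: einstein_assoc)
  have EQ: "E \<star> Q = Q" unfolding Q_def E_def C_def
    using mp1[of P] by (simp add: einstein_assoc)
  have "Q = ctrans Q" unfolding Q_def by (simp add: mp3)
  also have "\<dots> = ctrans (E \<star> Q)" using EQ by simp
  also have "\<dots> = ctrans Q \<star> ctrans E" by (simp add: ctrans_einstein)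
  also have "\<dots> = Q \<star> E" by (simp only: Q_def E_def mp3)
  also have "\<dots> = E" by (rule QE)
  finally show ?thesis by (simp add: Q_def E_def C_def)
qed

theorem theorem3p3:
  fixes R :: "('i::finite, 'h::finite) tensor"
    and S :: "('h, 'g::finite) tensor"
    and T :: "('g, 'j::finite) tensor"
    and A :: "('i, 'j) tensor"
  assumes "A = R \<star> S \<star> T"
  shows "mp_inv (mp_inv R \<star> A \<star> mp_inv T) = mp_inv (A \<star> mp_inv T) \<star> A \<star> mp_inv (mp_inv R \<star> A)"
proof -
  define P where "P = mp_inv R \<star> A \<star> mp_inv T"
  have a: "R \<star> P = A \<star> mp_inv T"
  proof -
    have "R \<star> P = (R \<star> mp_inv R \<star> R) \<star> S \<star> T \<star> mp_inv T"
      by (simp add: P_def assms einstein_assoc)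
    then show ?thesis by (simp add: mp1 assms)
  qed
  have b: "P \<star> T = mp_inv R \<star> A"
  proof -
    have "P \<star> T = mp_inv R \<star> R \<star> S \<star> (T \<star> mp_inv T \<star> T)"
      by (simp add: P_def assms einstein_assoc)
    then show ?thesis by (simp add: mp1 assms einstein_assoc)
  qed
  have c: "mp_inv R \<star> R \<star> P = P"
  proof -
    have "mp_inv R \<star> R \<star> P = (mp_inv R \<star> R \<star> mp_inv R) \<star> A \<star> mp_inv T"
      by (simp add: P_def einstein_assoc)
    then show ?thesis by (simp add: mp2 P_def)
  qed
  have d: "P \<star> T \<star> mp_inv T = P"
  proof -
    have "P \<star> T \<star> mp_inv T = mp_inv R \<star> A \<star> (mp_inv T \<star> T \<star> mp_inv T)"
      by (simp add: P_def einstein_assoc)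
    then show ?thesis by (simp add: mp2 P_def)
  qed
  have e: "A = R \<star> P \<star> T"
  proof -
    have "R \<star> P \<star> T = (R \<star> mp_inv R \<star> R) \<star> S \<star> (T \<star> mp_inv T \<star> T)"
      by (simp add: P_def assms einstein_assoc)
    then show ?thesis by (simp add: mp1 assms)
  qed
  have "mp_inv (A \<star> mp_inv T) \<star> A \<star> mp_inv (mp_inv R \<star> A)
      = (mp_inv (R \<star> P) \<star> (R \<star> P)) \<star> T \<star> mp_inv (P \<star> T)"
    using a b e by (simp add: einstein_assoc)
  also have "\<dots> = mp_inv P \<star> ((P \<star> T) \<star> mp_inv (P \<star> T))"
  proof -
    have l1: "mp_inv (R \<star> P) \<star> R \<star> P = mp_inv P \<star> P"
      using L1[OF c] by (simp add: einstein_assoc)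
    show ?thesis by (simp add: l1 einstein_assoc)
  qed
  also have "\<dots> = mp_inv P \<star> P \<star> mp_inv P"
    by (simp add: L2[OF d] einstein_assoc)
  also have "\<dots> = mp_inv P" by (rule mp2)
  finally show ?thesis by (simp add: P_def)
qed

end
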